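(* Let $I$ be a connected and locally connected topological space and $h:I\to\mathbb{R}$ a positive continuous function attaining its lower bound at $v\in I$. For $y,z\in I$ define $$\lambda(y,z)=\sup\{\lambda : C_{y,\lambda}=C_{z,\lambda},\ \lambda\le h(y),\ \lambda\le h(z)\}.$$ Then for fixed $y$ the function $z\mapsto\lambda(y,z)$ is lower semi-continuous: for every $z_0\in I$, $$\liminf_{z\to z_0}\lambda(y,z)\ge\lambda(y,z_0).$$
   Context: For $x\in I$ and $\lambda\le h(x)$, $C_{x,\lambda}$ denotes the maximal connected subset of $\{y\in I: h(y)\ge\lambda\}$ containing $x$. *)

theory Defs
  imports "HOL-Analysis.Analysis"
begin

definition level_comp :: "'a topology \<Rightarrow> ('a \<Rightarrow> real) \<Rightarrow> 'a \<Rightarrow> real \<Rightarrow> 'a set" where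
  "level_comp X h x l =
     connected_component_of_set (subtopology X {y \<in> topspace X. l \<le> h y}) x"

definition merge_level :: "'a topology \<Rightarrow> ('a \<Rightarrow> real) \<Rightarrow> 'a \<Rightarrow> 'a \<Rightarrow> real" where
  "merge_level X h y z =
     Sup {l. level_comp X h y l = level_comp X h z l \<and> l \<le> h y \<and> l \<le> h z}"

end

theory Submission
  imports Defs
begin

lemma ml_lower:
  assumes "connectedin X T" "y \<in> T" "z \<in> T" "T \<subseteq> {x\<in>topspace X. l \<le> h x}"
  shows "l \<le> merge_level X h y z"
proof -
  let ?S = "{l. level_comp X h y l = level_comp X h z l \<and> l \<le> h y \<and> l \<le> h z}"
  let ?Y = "subtopology X {x\<in>topspace X. l \<le> h x}"
  have c: "connected_component_of ?Y y z"
    unfolding connected_component_of_def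
    using assms by (auto simp: connectedin_subtopology)
  have "level_comp X h y l = level_comp X h z l"
    unfolding level_comp_def using c connected_component_of_equiv by metis
  moreover have "l \<le> h y" "l \<le> h z" using assms by auto
  ultimately have "l \<in> ?S" by blast
  moreover have "bdd_above ?S" by (rule bdd_aboveI[of _ "h y"]) auto
  ultimately show ?thesis unfolding merge_level_def by (rule cSup_upper)
qed


lemma ml_upper:
  assumes "{l. level_comp X h y l = level_comp X h z l \<and> l \<le> h y \<and> l \<le> h z} \<noteq> {}"
    and "l < merge_level X h y z" and "z \<in> topspace X"
  shows "\<exists>T. connectedin X T \<and> y \<in> T \<and> z \<in> T \<and> T \<subseteq> {x\<in>topspace X. l \<le> h x}"
proof -
  let ?S = "{l. level_comp X h y l = level_comp X h z l \<and> l \<le> h y \<and> l \<le> h z}"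
  have "bdd_above ?S" by (rule bdd_aboveI[of _ "h y"]) auto
  then have "\<exists>l1\<in>?S. l < l1"
    using assms(1,2) less_cSup_iff unfolding merge_level_def by (metis (no_types, lifting))
  then obtain l1 where l1: "l1 \<in> ?S" "l < l1" by blast
  have eq: "level_comp X h y l1 = level_comp X h z l1" and hz: "l1 \<le> h z" using l1 by auto
  let ?Y = "subtopology X {x\<in>topspace X. l1 \<le> h x}"
  have "connected_component_of ?Y z z"
    using hz assms(3) by (simp add: connected_component_of_refl)
  then have "z \<in> level_comp X h z l1" unfolding level_comp_def by simp
  then have "z \<in> level_comp X h y l1" using eq by simp
  then have "connected_component_of ?Y y z" unfolding level_comp_def by simp
  then obtain T where T: "connectedin ?Y T" "y \<in> T" "z \<in> T"
    unfolding connected_component_of_def by blast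
  have "connectedin X T" "T \<subseteq> {x\<in>topspace X. l1 \<le> h x}" using T(1) by (simp_all add: connectedin_subtopology)
  moreover have "{x\<in>topspace X. l1 \<le> h x} \<subseteq> {x\<in>topspace X. l \<le> h x}" using l1(2) by auto
  ultimately show ?thesis using T by blast
qed

theorem mainTheorem7:
  fixes X :: "'a topology" and h :: "'a \<Rightarrow> real" and v y z0 :: 'a
  assumes "connected_space X" and "locally_connected_space X"
    and "continuous_map X euclideanreal h"
    and "\<forall>x\<in>topspace X. h x > 0"
    and "v \<in> topspace X" and "\<forall>x\<in>topspace X. h v \<le> h x"
    and "y \<in> topspace X" and "z0 \<in> topspace X"
  shows "Liminf (atin X z0) (\<lambda>z. ereal (merge_level X h y z)) \<ge> ereal (merge_level X h y z0)"
  unfolding le_Liminf_iff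
proof (intro allI impI)
  fix c assume c: "c < ereal (merge_level X h y z0)"
  obtain l where l: "c < ereal l" "l < merge_level X h y z0"
    using ereal_dense2[OF c] by auto
  obtain m where m: "l < m" "m < merge_level X h y z0"
    using l(2) dense by blast
  have hvy: "h v \<le> h y" and hvz: "h v \<le> h z0" using assms(6,7,8) by auto
  have ne: "{l. level_comp X h y l = level_comp X h z0 l \<and> l \<le> h y \<and> l \<le> h z0} \<noteq> {}"
  proof -
    have ct: "connectedin X (topspace X)" using assms(1) by (simp add: connectedin_topspace)
    have "topspace X \<subseteq> {x\<in>topspace X. h v \<le> h x}" using assms(6) by blast
    then have "connected_component_of (subtopology X {x\<in>topspace X. h v \<le> h x}) y z0"
      unfolding connected_component_of_def
      using ct assms(7,8) connectedin_subtopology by blast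
    then have "level_comp X h y (h v) = level_comp X h z0 (h v)"
      unfolding level_comp_def using connected_component_of_equiv by metis
    then show ?thesis using hvy hvz by blast
  qed
  obtain T where T: "connectedin X T" "y \<in> T" "z0 \<in> T" "T \<subseteq> {x\<in>topspace X. m \<le> h x}"
    using ml_upper[OF ne m(2) assms(8)] by blast
  define U where "U = {x\<in>topspace X. h x \<in> {l<..}}"
  have oU: "openin X U" unfolding U_def
    using openin_continuous_map_preimage[OF assms(3), of "{l<..}"] by simp
  have "m \<le> h z0" using T(3,4) by blast
  then have z0U: "z0 \<in> U" using m(1) assms(8) unfolding U_def by simp
  define W where "W = connected_component_of_set (subtopology X U) z0"
  have lc: "\<And>U x. openin X U \<Longrightarrow> x \<in> U \<Longrightarrow> openin X (connected_component_of_set (subtopology X U) x)"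
    using assms(2) unfolding locally_connected_space_eq_open_connected_component_of by blast
  have oW: "openin X W" unfolding W_def using lc[OF oU z0U] .
  have "z0 \<in> topspace (subtopology X U)" using z0U assms(8) by simp
  then have z0W: "z0 \<in> W" unfolding W_def
    by (simp add: connected_component_of_refl)
  have "\<forall>z\<in>W. c < ereal (merge_level X h y z)"
  proof
    fix z assume "z \<in> W"
    then obtain T' where T': "connectedin (subtopology X U) T'" "z0 \<in> T'" "z \<in> T'"
      unfolding W_def connected_component_of_def by blast
    have T'': "connectedin X T'" "T' \<subseteq> U" using T'(1) by (simp_all add: connectedin_subtopology)
    have cU: "connectedin X (T \<union> T')" by (rule connectedin_Un[OF T(1) T''(1)]) (use T(3) T'(2) in blast)
    have s1: "T \<subseteq> {x\<in>topspace X. l \<le> h x}"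
    proof
      fix x assume "x \<in> T" then have "x \<in> topspace X" "m \<le> h x" using T(4) by blast+
      then show "x \<in> {x\<in>topspace X. l \<le> h x}" using m(1) by simp
    qed
    have s2: "T' \<subseteq> {x\<in>topspace X. l \<le> h x}"
    proof
      fix x assume "x \<in> T'" then have "x \<in> U" using T''(2) by blast
      then show "x \<in> {x\<in>topspace X. l \<le> h x}" unfolding U_def by simp
    qed
    have sub: "T \<union> T' \<subseteq> {x\<in>topspace X. l \<le> h x}" by (rule Un_least[OF s1 s2])
    have "y \<in> T \<union> T'" "z \<in> T \<union> T'" using T(2) T'(3) by blast+
    then have "l \<le> merge_level X h y z"
      using ml_lower[OF cU _ _ sub] by blast
    then have "ereal l \<le> ereal (merge_level X h y z)" by simp
    then show "c < ereal (merge_level X h y z)" by (rule less_le_trans[OF l(1)])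
  qed
  show "\<forall>\<^sub>F z in atin X z0. c < ereal (merge_level X h y z)"
    unfolding eventually_atin
  proof (rule disjI2)
    show "\<exists>U. openin X U \<and> z0 \<in> U \<and> (\<forall>x\<in>U - {z0}. c < ereal (merge_level X h y x))"
    proof (intro exI[of _ W] conjI oW z0W ballI)
      fix x assume "x \<in> W - {z0}"
      then show "c < ereal (merge_level X h y x)" using \<open>\<forall>z\<in>W. c < ereal (merge_level X h y z)\<close> by blast
    qed
  qed
qed

end
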